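(* Let $\Phi=\varphi\land\bigwedge RE\land\bigwedge DI$ be an $\mathcal{ALCQIO}_{b,Re}$-formula over $\tau$ with $RE=\{\mathit{Reach}(B_1,S_1,A_1),\dots,\mathit{Reach}(B_h,S_h,A_h)\}$. Let $1\le h'\le h$ and let $\mathcal{M}$ be a $\tau$-structure such that $\mathcal{M}\models\mathit{assoc}(\Phi)$, $\mathcal{M}$ is $\Phi$-semi-connected, and $\mathcal{M}$ has $\ell$-useful labelings $f_\ell$ for all $1\le\ell\le h$. If $\mathit{val}_{f_{h'}}(D^{\mathcal{M}}_{h'})>0$, then there is a tuple $\mathfrak{t}=(a_0,a_1,r)$ with $a_0,a_1\in M$ and $r\in\mathsf{N_F}$ such that: 1. $D^{\mathcal{M}}_\ell=D^{\mathcal{M}\rhd\mathfrak{t}}_\ell$ for all $\ell\ne h'$; 2. $\overline{tp}^{\varphi}_{\mathcal{M}}(u)=\overline{tp}^{\varphi}_{\mathcal{M}\rhd\mathfrak{t}}(u)$ for all $u\in M$; 3. $\mathcal{M}\rhd\mathfrak{t}\models\mathit{assoc}(\Phi)$; 4. $\mathit{val}_{f_{h'}}(D^{\mathcal{M}}_{h'})>\mathit{val}_{f_{h'}}(D^{\mathcal{M}\rhd\mathfrak{t}}_{h'})$; 5. $\mathit{val}_{f_\ell}(D^{\mathcal{M}}_\ell)=\mathit{val}_{f_\ell}(D^{\mathcal{M}\rhd\mathfrak{t}}_\ell)$ for all $\ell\ne h'$; 6. $\mathcal{M}\rhd\mathfrak{t}$ is $\Phi$-semi-connected; 7. $f_\ell$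 is an $\ell$-useful labeling for $\mathcal{M}\rhd\mathfrak{t}$ for all $1\le\ell\le h$.
   Context: Structures are finite; $\tau$ has atomic concepts, atomic roles (a subset $\mathsf{N_F}$ functional, interpreted as partial functions) and nominals. $\mathcal{ALCQIO}_b$: concepts built from atomic concepts and nominals ($o$ denotes $\{o^{\mathcal{M}}\}$) using $\sqcap,\sqcup,\neg,\exists r.C,\exists^{\le n}r.C$ for roles $r$ atomic or inverse $r^-$; formulae are Boolean combinations of inclusions $C\sqsubseteq D$ and equalities $C\equiv D$; standard semantics. A reachability assertion $\mathit{Reach}(B,S,A)$ has atomic concepts $A,B$ and $S\subseteq\mathsf{N_F}$; $\mathit{Disj}(A_1,A_2)$ is $A_1\sqcap A_2\equiv\bot$. $RE,DI$ are compatible if for every two assertions $\mathit{Reach}(B_1,S_1,A_1),\mathit{Reach}(B_2,S_2,A_2)\in RE$ with $S_1\cap S_2\neq\emptyset$, $\mathit{Disj}(A_1,A_2)\in DI$. An $\mathcal{ALCQIO}_{b,Re}$-formula is $\Phi=\varphi\land\bigwedge RE\land\bigwedge DI$ with $\varphi\in\mathcal{ALCQIO}_b$, $RE,DI$ finite and compatible. $\mathit{assoc}(\Phi)=\varphi\land\bigwedge_{\mathit{Reach}(B,S,A)\in RE}(B\sqsubseteq A)\land\bigwedge DI$. $D^{\mathcal{M}}_{\ell}$ is the directed graph on vertex set $A_{\ell}^{\mathcal{M}}$ with edges $\bigcup_{s\in S_{\ell}}s^{\mathcal{M}}\cap(A_{\ell}^{\mathcal{M}}\times A_{\ell}^{\mathcal{M}})$.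 $\mathcal{M}$ is $\Phi$-semi-connected if $\mathcal{M}\models\mathit{assoc}(\Phi)$ and for every $\ell$ and $u\in A_{\ell}^{\mathcal{M}}$, $u$ is reachable in $D^{\mathcal{M}}_{\ell}$ from $B_{\ell}^{\mathcal{M}}$ or from a directed cycle of $D^{\mathcal{M}}_{\ell}$. Types: $\mathrm{Con}(\varphi)$ is the set of concepts occurring in $\varphi$ (including subconcepts), $\mathrm{TYPES}_\varphi$ its power set, $\overline{tp}^{\varphi}_{\mathcal{M}}(u)=\{C\in\mathrm{Con}(\varphi)\mid u\in C^{\mathcal{M}}\}$. An $\ell$-useful labeling for $\mathcal{M}$ is $f_\ell:A_{\ell}^{\mathcal{M}}\to[1,|\mathrm{TYPES}_\varphi|]$ such that (1) $f_\ell(u)=f_\ell(v)$ implies equal types, and (2) for every $u\in A_{\ell}^{\mathcal{M}}$, either $u\in B_{\ell}^{\mathcal{M}}$ or there are $v,w\in A_{\ell}^{\mathcal{M}}$ with $f_\ell(u)=f_\ell(v)$, $f_\ell(w)<f_\ell(v)$ and $(w,v)$ an edge of $D^{\mathcal{M}}_{\ell}$. A base for $D^{\mathcal{M}}_{\ell}$ is a set $X\subseteq A_{\ell}^{\mathcal{M}}$ from which all of $A_{\ell}^{\mathcal{M}}$ is reachable in $D^{\mathcal{M}}_{\ell}$; $\mathit{val}_f(X)=\sum_{x\in X\setminus B_{\ell}^{\mathcal{M}}}f(x)$ and $\mathit{val}_f(D^{\mathcal{M}}_{\ell})$ is the minimum of $\mathit{val}_f(X)$ over all bases $X$. The operation $\rhd$: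 for $\mathfrak{t}=(a_0,a_1,r)$, $\mathcal{M}\rhd\mathfrak{t}$ has the same universe and interpretations as $\mathcal{M}$ except $r^{\mathcal{M}\rhd\mathfrak{t}}=\big(r^{\mathcal{M}}\setminus\{(a_i,b)\mid (a_i,b)\in r^{\mathcal{M}},i\in\{0,1\}\}\big)\cup\{(a_{1-i},b)\mid (a_i,b)\in r^{\mathcal{M}},i\in\{0,1\}\}$. *)

theory Defs
  imports Main
begin

text \<open>Signature tau: atomic concepts are the elements of type 'c, atomic roles the
elements of type 'r (a subset NF of which is functional; NF is a parameter),
nominals the elements of type 'o.\<close>

datatype 'r role = RName 'r | RInv 'r

datatype ('c, 'r, 'o) concept =
    CAtom 'c
  | CNom 'o
  | CAnd "('c, 'r, 'o) concept" "('c, 'r, 'o) concept"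
  | COr "('c, 'r, 'o) concept" "('c, 'r, 'o) concept"
  | CNot "('c, 'r, 'o) concept"
  | CEx "'r role" "('c, 'r, 'o) concept"
  | CAtMost nat "'r role" "('c, 'r, 'o) concept"

datatype ('c, 'r, 'o) formula =
    FIncl "('c, 'r, 'o) concept" "('c, 'r, 'o) concept"
  | FEq "('c, 'r, 'o) concept" "('c, 'r, 'o) concept"
  | FNeg "('c, 'r, 'o) formula"
  | FConj "('c, 'r, 'o) formula" "('c, 'r, 'o) formula"
  | FDisj "('c, 'r, 'o) formula" "('c, 'r, 'o) formula"

record ('a, 'c, 'r, 'o) struc =
  univ :: "'a set"
  cint :: "'c \<Rightarrow> 'a set"
  rint :: "'r \<Rightarrow> ('a \<times> 'a) set"
  oint :: "'o \<Rightarrow> 'a"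

definition wf_struc :: "'r set \<Rightarrow> ('a, 'c, 'r, 'o) struc \<Rightarrow> bool" where
  "wf_struc NF M \<longleftrightarrow>
     finite (univ M) \<and>
     (\<forall>c. cint M c \<subseteq> univ M) \<and>
     (\<forall>r. rint M r \<subseteq> univ M \<times> univ M) \<and>
     (\<forall>n. oint M n \<in> univ M) \<and>
     (\<forall>r\<in>NF. \<forall>x y z. (x, y) \<in> rint M r \<longrightarrow> (x, z) \<in> rint M r \<longrightarrow> y = z)"

fun role_int :: "('a, 'c, 'r, 'o) struc \<Rightarrow> 'r role \<Rightarrow> ('a \<times> 'a) set" where
  "role_int M (RName r) = rint M r"
| "role_int M (RInv r) = (rint M r)\<inverse>"

fun ceval :: "('a, 'c, 'r, 'o) struc \<Rightarrow> ('c, 'r, 'o) concept \<Rightarrow> 'a set" where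
  "ceval M (CAtom A) = cint M A"
| "ceval M (CNom n) = {oint M n}"
| "ceval M (CAnd C D) = ceval M C \<inter> ceval M D"
| "ceval M (COr C D) = ceval M C \<union> ceval M D"
| "ceval M (CNot C) = univ M - ceval M C"
| "ceval M (CEx R C) = {x \<in> univ M. \<exists>y. (x, y) \<in> role_int M R \<and> y \<in> ceval M C}"
| "ceval M (CAtMost n R C) =
     {x \<in> univ M. card {y. (x, y) \<in> role_int M R \<and> y \<in> ceval M C} \<le> n}"

fun fsat :: "('a, 'c, 'r, 'o) struc \<Rightarrow> ('c, 'r, 'o) formula \<Rightarrow> bool" where
  "fsat M (FIncl C D) = (ceval M C \<subseteq> ceval M D)"
| "fsat M (FEq C D) = (ceval M C = ceval M D)"
| "fsat M (FNeg F) = (\<not> fsat M F)"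
| "fsat M (FConj F G) = (fsat M F \<and> fsat M G)"
| "fsat M (FDisj F G) = (fsat M F \<or> fsat M G)"

fun subconcepts :: "('c, 'r, 'o) concept \<Rightarrow> ('c, 'r, 'o) concept set" where
  "subconcepts (CAtom A) = {CAtom A}"
| "subconcepts (CNom n) = {CNom n}"
| "subconcepts (CAnd C D) = insert (CAnd C D) (subconcepts C \<union> subconcepts D)"
| "subconcepts (COr C D) = insert (COr C D) (subconcepts C \<union> subconcepts D)"
| "subconcepts (CNot C) = insert (CNot C) (subconcepts C)"
| "subconcepts (CEx R C) = insert (CEx R C) (subconcepts C)"
| "subconcepts (CAtMost n R C) = insert (CAtMost n R C) (subconcepts C)"

fun Con :: "('c, 'r, 'o) formula \<Rightarrow> ('c, 'r, 'o) concept set" where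
  "Con (FIncl C D) = subconcepts C \<union> subconcepts D"
| "Con (FEq C D) = subconcepts C \<union> subconcepts D"
| "Con (FNeg F) = Con F"
| "Con (FConj F G) = Con F \<union> Con G"
| "Con (FDisj F G) = Con F \<union> Con G"

definition TYPES :: "('c, 'r, 'o) formula \<Rightarrow> ('c, 'r, 'o) concept set set" where
  "TYPES \<phi> = Pow (Con \<phi>)"

definition tp :: "('c, 'r, 'o) formula \<Rightarrow> ('a, 'c, 'r, 'o) struc \<Rightarrow> 'a \<Rightarrow> ('c, 'r, 'o) concept set" where
  "tp \<phi> M u = {C \<in> Con \<phi>. u \<in> ceval M C}"

text \<open>A reachability assertion Reach(B,S,A) is represented as the triple (B, S, A).
The set RE = {Reach(B_1,S_1,A_1),...,Reach(B_h,S_h,A_h)} is represented by the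
distinct list RE of length h, the l-th assertion (1 <= l <= h) being RE ! (l - 1).
A disjointness assertion Disj(A1,A2) is represented by the pair (A1, A2).\<close>

type_synonym ('c, 'r) reach = "'c \<times> 'r set \<times> 'c"

definition reachB :: "('c, 'r) reach list \<Rightarrow> nat \<Rightarrow> 'c" where
  "reachB RE l = fst (RE ! (l - 1))"
definition reachS :: "('c, 'r) reach list \<Rightarrow> nat \<Rightarrow> 'r set" where
  "reachS RE l = fst (snd (RE ! (l - 1)))"
definition reachA :: "('c, 'r) reach list \<Rightarrow> nat \<Rightarrow> 'c" where
  "reachA RE l = snd (snd (RE ! (l - 1)))"

definition compatible :: "('c, 'r) reach list \<Rightarrow> ('c \<times> 'c) set \<Rightarrow> bool" where
  "compatible RE DI \<longleftrightarrow>
     (\<forall>i\<in>{1..length RE}. \<forall>j\<in>{1..length RE}. i \<noteq> j \<longrightarrow>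
        reachS RE i \<inter> reachS RE j \<noteq> {} \<longrightarrow>
        (reachA RE i, reachA RE j) \<in> DI \<or> (reachA RE j, reachA RE i) \<in> DI)"

definition is_ALCQIO_bRe :: "'r set \<Rightarrow> ('c, 'r) reach list \<Rightarrow> ('c \<times> 'c) set \<Rightarrow> bool" where
  "is_ALCQIO_bRe NF RE DI \<longleftrightarrow>
     distinct RE \<and> finite DI \<and> (\<forall>l\<in>{1..length RE}. reachS RE l \<subseteq> NF) \<and>
     compatible RE DI"

definition sat_assoc :: "('a, 'c, 'r, 'o) struc \<Rightarrow> ('c, 'r, 'o) formula \<Rightarrow> ('c, 'r) reach list \<Rightarrow> ('c \<times> 'c) set \<Rightarrow> bool" where
  "sat_assoc M \<phi> RE DI \<longleftrightarrow>
     fsat M \<phi> \<and>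
     (\<forall>l\<in>{1..length RE}. cint M (reachB RE l) \<subseteq> cint M (reachA RE l)) \<and>
     (\<forall>(A1, A2)\<in>DI. cint M A1 \<inter> cint M A2 = {})"

text \<open>D^M_l as a pair (vertex set, edge set).\<close>
definition Dgraph :: "('a, 'c, 'r, 'o) struc \<Rightarrow> ('c, 'r) reach list \<Rightarrow> nat \<Rightarrow> 'a set \<times> ('a \<times> 'a) set" where
  "Dgraph M RE l =
     (cint M (reachA RE l),
      (\<Union>s\<in>reachS RE l. rint M s) \<inter> (cint M (reachA RE l) \<times> cint M (reachA RE l)))"

definition semi_connected :: "('a, 'c, 'r, 'o) struc \<Rightarrow> ('c, 'r, 'o) formula \<Rightarrow> ('c, 'r) reach list \<Rightarrow> ('c \<times> 'c) set \<Rightarrow> bool" where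
  "semi_connected M \<phi> RE DI \<longleftrightarrow>
     sat_assoc M \<phi> RE DI \<and>
     (\<forall>l\<in>{1..length RE}. \<forall>u\<in>fst (Dgraph M RE l).
        (\<exists>b\<in>cint M (reachB RE l). (b, u) \<in> (snd (Dgraph M RE l))\<^sup>*) \<or>
        (\<exists>c. (c, c) \<in> (snd (Dgraph M RE l))\<^sup>+ \<and> (c, u) \<in> (snd (Dgraph M RE l))\<^sup>*))"

definition useful_labeling :: "('c, 'r, 'o) formula \<Rightarrow> ('c, 'r) reach list \<Rightarrow> nat \<Rightarrow> ('a, 'c, 'r, 'o) struc \<Rightarrow> ('a \<Rightarrow> nat) \<Rightarrow> bool" where
  "useful_labeling \<phi> RE l M f \<longleftrightarrow>
     (\<forall>u\<in>cint M (reachA RE l). 1 \<le> f u \<and> f u \<le> card (TYPES \<phi>)) \<and>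
     (\<forall>u\<in>cint M (reachA RE l). \<forall>v\<in>cint M (reachA RE l). f u = f v \<longrightarrow> tp \<phi> M u = tp \<phi> M v) \<and>
     (\<forall>u\<in>cint M (reachA RE l). u \<in> cint M (reachB RE l) \<or>
        (\<exists>v\<in>cint M (reachA RE l). \<exists>w\<in>cint M (reachA RE l).
           f u = f v \<and> f w < f v \<and> (w, v) \<in> snd (Dgraph M RE l)))"

definition is_base :: "'a set \<times> ('a \<times> 'a) set \<Rightarrow> 'a set \<Rightarrow> bool" where
  "is_base D X \<longleftrightarrow> X \<subseteq> fst D \<and> (\<forall>v\<in>fst D. \<exists>x\<in>X. (x, v) \<in> (snd D)\<^sup>*)"

definition val_set :: "('a \<Rightarrow> nat) \<Rightarrow> 'a set \<Rightarrow> 'a set \<Rightarrow> nat" where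
  "val_set f B X = (\<Sum>x\<in>X - B. f x)"

definition val_graph :: "('a \<Rightarrow> nat) \<Rightarrow> 'a set \<Rightarrow> 'a set \<times> ('a \<times> 'a) set \<Rightarrow> nat" where
  "val_graph f B D = Min {val_set f B X | X. is_base D X}"

definition val :: "('a \<Rightarrow> nat) \<Rightarrow> ('a, 'c, 'r, 'o) struc \<Rightarrow> ('c, 'r) reach list \<Rightarrow> nat \<Rightarrow> nat" where
  "val f M RE l = val_graph f (cint M (reachB RE l)) (Dgraph M RE l)"

definition swap_op :: "('a, 'c, 'r, 'o) struc \<Rightarrow> 'a \<times> 'a \<times> 'r \<Rightarrow> ('a, 'c, 'r, 'o) struc" where
  "swap_op M t = (case t of (a0, a1, r) \<Rightarrow>
     M\<lparr> rint := (rint M)(r :=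
        (rint M r - {(a, b). (a, b) \<in> rint M r \<and> (a = a0 \<or> a = a1)})
        \<union> {(a1, b) | b. (a0, b) \<in> rint M r} \<union> {(a0, b) | b. (a1, b) \<in> rint M r}) \<rparr>)"

end

theory Submission
  imports Defs
begin


definition sw :: "'a \<Rightarrow> 'a \<Rightarrow> 'a \<Rightarrow> 'a" where
  "sw a0 a1 x = (if x = a0 then a1 else if x = a1 then a0 else x)"

lemma sw_sw[simp]: "sw a0 a1 (sw a0 a1 x) = x"
  by (simp add: sw_def)

lemma sw_other[simp]: "x \<noteq> a0 \<Longrightarrow> x \<noteq> a1 \<Longrightarrow> sw a0 a1 x = x"
  by (simp add: sw_def)

lemma sw_univ: "a0 \<in> U \<Longrightarrow> a1 \<in> U \<Longrightarrow> (sw a0 a1 x \<in> U) = (x \<in> U)"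
  by (auto simp: sw_def)

lemma inj_sw: "inj (sw a0 a1)"
  by (metis injI sw_sw)

lemma swap_fields[simp]:
  "univ (swap_op M (a0, a1, r)) = univ M"
  "cint (swap_op M (a0, a1, r)) = cint M"
  "oint (swap_op M (a0, a1, r)) = oint M"
  by (simp_all add: swap_op_def)

lemma rint_swap_mem:
  "((a, b) \<in> rint (swap_op M (a0, a1, r)) r') =
   (if r' = r then (sw a0 a1 a, b) \<in> rint M r else (a, b) \<in> rint M r')"
  by (auto simp add: swap_op_def sw_def)

lemma ceval_sub: "wf_struc NF M \<Longrightarrow> ceval M C \<subseteq> univ M"
  by (induction C) (auto simp: wf_struc_def)

lemma sub_self: "C \<in> subconcepts C"
  by (cases C) auto

lemma sub_trans: "D \<in> subconcepts C \<Longrightarrow> subconcepts D \<subseteq> subconcepts C"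
  by (induction C) auto

lemma Con_sub: "C \<in> Con F \<Longrightarrow> subconcepts C \<subseteq> Con F"
  by (induction F) (auto dest: sub_trans)

lemma ceval_swap:
  assumes wf: "wf_struc NF M" and a0: "a0 \<in> univ M" and a1: "a1 \<in> univ M"
    and hty: "\<forall>C\<in>Con \<phi>. (a0 \<in> ceval M C) = (a1 \<in> ceval M C)"
  shows "subconcepts C \<subseteq> Con \<phi> \<Longrightarrow> ceval (swap_op M (a0, a1, r)) C = ceval M C"
proof (induction C)
  let ?M = "swap_op M (a0, a1, r)"
  let ?s = "sw a0 a1"
  have swC: "(?s x \<in> ceval M D) = (x \<in> ceval M D)" if "D \<in> Con \<phi>" for x D
    using hty that by (auto simp: sw_def)
  have runiv: "(a, b) \<in> rint M q \<Longrightarrow> a \<in> univ M \<and> b \<in> univ M" for a b q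
    using wf unfolding wf_struc_def by blast
  {
    case (CEx R C)
    then have IH: "ceval ?M C = ceval M C" and CC: "CEx R C \<in> Con \<phi>" by auto
    have CC2: "C \<in> Con \<phi>" using CEx.prems sub_self by auto
    show ?case
    proof (cases R)
      case (RName q)
      show ?thesis
      proof (cases "q = r")
        case True
        have "x \<in> ceval ?M (CEx R C) \<longleftrightarrow> x \<in> ceval M (CEx R C)" for x
        proof -
          have "x \<in> ceval ?M (CEx R C) \<longleftrightarrow> x \<in> univ M \<and> ?s x \<in> ceval M (CEx R C)"
            using RName True IH sw_univ[OF a0 a1, of x] by (simp add: rint_swap_mem)
          also have "\<dots> \<longleftrightarrow> x \<in> ceval M (CEx R C)"
            using swC[OF CC, of x] by auto
          finally show ?thesis .
        qed
        then show ?thesis by blast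
      next
        case False
        then show ?thesis using RName IH by (auto simp: rint_swap_mem)
      qed
    next
      case (RInv q)
      show ?thesis
      proof (cases "q = r")
        case True
        have "x \<in> ceval ?M (CEx R C) \<longleftrightarrow> x \<in> ceval M (CEx R C)" for x
        proof
          assume "x \<in> ceval ?M (CEx R C)"
          then obtain b where "x \<in> univ M" "(b, x) \<in> rint ?M r" "b \<in> ceval M C"
            using RInv True IH by auto
          then have "(?s b, x) \<in> rint M r" by (simp add: rint_swap_mem)
          moreover have "?s b \<in> ceval M C"
            using swC[OF CC2, of b] \<open>b \<in> ceval M C\<close> by simp
          ultimately show "x \<in> ceval M (CEx R C)" using RInv True \<open>x \<in> univ M\<close> by auto
        next
          assume "x \<in> ceval M (CEx R C)"
          then obtain b where "x \<in> univ M" "(b, x) \<in> rint M r" "b \<in> ceval M C"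
            using RInv True by auto
          moreover have "?s b \<in> ceval M C"
            using swC[OF CC2, of b] \<open>b \<in> ceval M C\<close> by simp
          moreover have "(?s b, x) \<in> rint ?M r" using \<open>(b, x) \<in> rint M r\<close>
            by (simp add: rint_swap_mem)
          ultimately show "x \<in> ceval ?M (CEx R C)" using RInv True IH by auto
        qed
        then show ?thesis by blast
      next
        case False
        then show ?thesis using RInv IH by (auto simp: rint_swap_mem)
      qed
    qed
  next
    case (CAtMost n R C)
    then have IH: "ceval ?M C = ceval M C" and CC: "CAtMost n R C \<in> Con \<phi>" by auto
    have CC2: "C \<in> Con \<phi>" using CAtMost.prems sub_self by auto
    show ?case
    proof (cases R)
      case (RName q)
      show ?thesis
      proof (cases "q = r")
        case True
        have "x \<in> ceval ?M (CAtMost n R C) \<longleftrightarrow> x \<in> ceval M (CAtMost n R C)" for x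
        proof -
          have "x \<in> ceval ?M (CAtMost n R C) \<longleftrightarrow> x \<in> univ M \<and> ?s x \<in> ceval M (CAtMost n R C)"
            using RName True IH sw_univ[OF a0 a1, of x] by (simp add: rint_swap_mem)
          also have "\<dots> \<longleftrightarrow> x \<in> ceval M (CAtMost n R C)"
            using swC[OF CC, of x] by auto
          finally show ?thesis .
        qed
        then show ?thesis by blast
      next
        case False
        then show ?thesis using RName IH by (auto simp: rint_swap_mem)
      qed
    next
      case (RInv q)
      show ?thesis
      proof (cases "q = r")
        case True
        have eq: "{b. (x, b) \<in> role_int ?M R \<and> b \<in> ceval ?M C} =
                  ?s ` {b. (x, b) \<in> role_int M R \<and> b \<in> ceval M C}" for x
        proof (rule set_eqI)
          fix b
          show "b \<in> {b. (x, b) \<in> role_int ?M R \<and> b \<in> ceval ?M C} \<longleftrightarrow>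
                b \<in> ?s ` {b. (x, b) \<in> role_int M R \<and> b \<in> ceval M C}"
          proof
            assume "b \<in> {b. (x, b) \<in> role_int ?M R \<and> b \<in> ceval ?M C}"
            then have h: "(?s b, x) \<in> rint M r" "b \<in> ceval M C"
              using RInv True IH by (auto simp: rint_swap_mem)
            then have "?s b \<in> ceval M C" using swC[OF CC2, of b] by simp
            then show "b \<in> ?s ` {b. (x, b) \<in> role_int M R \<and> b \<in> ceval M C}"
              using h RInv True by (auto intro!: image_eqI[of _ _ "?s b"])
          next
            assume "b \<in> ?s ` {b. (x, b) \<in> role_int M R \<and> b \<in> ceval M C}"
            then obtain b' where "b = ?s b'" "(b', x) \<in> rint M r" "b' \<in> ceval M C"
              using RInv True by auto
            moreover have "?s b' \<in> ceval M C" using swC[OF CC2, of b'] calculation by simp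
            ultimately show "b \<in> {b. (x, b) \<in> role_int ?M R \<and> b \<in> ceval ?M C}"
              using RInv True IH by (auto simp: rint_swap_mem)
          qed
        qed
        show ?thesis
          using card_image[OF inj_on_subset[OF inj_sw subset_UNIV]]
          by (simp only: ceval.simps eq swap_fields) (simp add: card_image[OF inj_on_subset[OF inj_sw subset_UNIV]])
      next
        case False
        then show ?thesis using RInv IH by (auto simp: rint_swap_mem)
      qed
    qed
  }
qed auto



lemma tp_swap:
  assumes "wf_struc NF M" "a0 \<in> univ M" "a1 \<in> univ M"
    "\<forall>C\<in>Con \<phi>. (a0 \<in> ceval M C) = (a1 \<in> ceval M C)"
  shows "tp \<phi> (swap_op M (a0, a1, r)) u = tp \<phi> M u"
  using ceval_swap[OF assms] Con_sub unfolding tp_def by blast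

lemma fsat_swap:
  assumes "wf_struc NF M" "a0 \<in> univ M" "a1 \<in> univ M"
    "\<forall>C\<in>Con \<phi>. (a0 \<in> ceval M C) = (a1 \<in> ceval M C)"
  shows "Con F \<subseteq> Con \<phi> \<Longrightarrow> fsat (swap_op M (a0, a1, r)) F = fsat M F"
proof (induction F)
  case (FIncl C D)
  then show ?case using ceval_swap[OF assms, of C r] ceval_swap[OF assms, of D r] by simp
next
  case (FEq C D)
  then show ?case using ceval_swap[OF assms, of C r] ceval_swap[OF assms, of D r] by simp
qed auto

lemma Dgraph_mem:
  "(a, b) \<in> snd (Dgraph M RE l) \<longleftrightarrow> a \<in> cint M (reachA RE l) \<and> b \<in> cint M (reachA RE l) \<and>
     (\<exists>s\<in>reachS RE l. (a, b) \<in> rint M s)"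
  by (auto simp: Dgraph_def)

lemma Dgraph_swap_mem:
  "(a, b) \<in> snd (Dgraph (swap_op M (a0, a1, r)) RE l) \<longleftrightarrow>
     a \<in> cint M (reachA RE l) \<and> b \<in> cint M (reachA RE l) \<and>
     (\<exists>s\<in>reachS RE l. if s = r then (sw a0 a1 a, b) \<in> rint M r else (a, b) \<in> rint M s)"
proof -
  have "(a, b) \<in> snd (Dgraph (swap_op M (a0, a1, r)) RE l) \<longleftrightarrow>
     a \<in> cint M (reachA RE l) \<and> b \<in> cint M (reachA RE l) \<and>
     (\<exists>s\<in>reachS RE l. (a, b) \<in> rint (swap_op M (a0, a1, r)) s)"
    using Dgraph_mem[of a b "swap_op M (a0, a1, r)" RE l] by simp
  also have "\<dots> \<longleftrightarrow> a \<in> cint M (reachA RE l) \<and> b \<in> cint M (reachA RE l) \<and>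
     (\<exists>s\<in>reachS RE l. if s = r then (sw a0 a1 a, b) \<in> rint M r else (a, b) \<in> rint M s)"
    by (simp add: rint_swap_mem)
  finally show ?thesis .
qed

lemma Dgraph_fst_swap[simp]: "fst (Dgraph (swap_op M t) RE l) = fst (Dgraph M RE l)"
  by (cases t) (auto simp: Dgraph_def)

lemma edge_keep:
  assumes "(a, b) \<in> snd (Dgraph M RE l)" "a \<noteq> a0" "a \<noteq> a1"
  shows "(a, b) \<in> snd (Dgraph (swap_op M (a0, a1, r)) RE l)"
  using assms unfolding Dgraph_swap_mem Dgraph_mem[of a b M] by (metis sw_other)

lemma edge_move:
  assumes "(a, b) \<in> snd (Dgraph M RE l)"
    and "sw a0 a1 a \<in> cint M (reachA RE l)"
  shows "(a, b) \<in> snd (Dgraph (swap_op M (a0, a1, r)) RE l) \<or>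
         (sw a0 a1 a, b) \<in> snd (Dgraph (swap_op M (a0, a1, r)) RE l)"
proof -
  obtain s where s: "s \<in> reachS RE l" "(a, b) \<in> rint M s" "a \<in> cint M (reachA RE l)"
    "b \<in> cint M (reachA RE l)"
    using assms(1) unfolding Dgraph_mem by blast
  show ?thesis
  proof (cases "s = r")
    case True
    then have "(sw a0 a1 a, b) \<in> snd (Dgraph (swap_op M (a0, a1, r)) RE l)"
      using s assms(2) unfolding Dgraph_swap_mem by (intro conjI bexI[of _ s]) auto
    then show ?thesis by blast
  next
    case False
    then have "(a, b) \<in> snd (Dgraph (swap_op M (a0, a1, r)) RE l)"
      using s unfolding Dgraph_swap_mem by (intro conjI bexI[of _ s]) auto
    then show ?thesis by blast
  qed
qed

lemma edge_r:
  assumes "(a, b) \<in> rint M r" "r \<in> reachS RE l" "sw a0 a1 a \<in> cint M (reachA RE l)"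
    "b \<in> cint M (reachA RE l)"
  shows "(sw a0 a1 a, b) \<in> snd (Dgraph (swap_op M (a0, a1, r)) RE l)"
  using assms unfolding Dgraph_swap_mem by (intro conjI bexI[of _ r]) auto

lemma Dgraph_other:
  assumes "a0 \<notin> cint M (reachA RE l)" "a1 \<notin> cint M (reachA RE l)"
  shows "Dgraph (swap_op M (a0, a1, r)) RE l = Dgraph M RE l"
proof -
  have "snd (Dgraph (swap_op M (a0, a1, r)) RE l) = snd (Dgraph M RE l)"
  proof (rule set_eqI, clarify)
    fix a b
    show "(a, b) \<in> snd (Dgraph (swap_op M (a0, a1, r)) RE l) \<longleftrightarrow> (a, b) \<in> snd (Dgraph M RE l)"
    proof (cases "a \<in> cint M (reachA RE l)")
      case True
      then have "sw a0 a1 a = a" using assms by (metis sw_other)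
      then show ?thesis unfolding Dgraph_swap_mem Dgraph_mem[of a b M] by auto
    next
      case False
      then show ?thesis unfolding Dgraph_swap_mem Dgraph_mem[of a b M] by auto
    qed
  qed
  moreover have "fst (Dgraph (swap_op M (a0, a1, r)) RE l) = fst (Dgraph M RE l)" by simp
  ultimately show ?thesis by (metis prod.collapse)
qed

lemma Dgraph_other2:
  assumes "r \<notin> reachS RE l"
  shows "Dgraph (swap_op M (a0, a1, r)) RE l = Dgraph M RE l"
proof -
  have "snd (Dgraph (swap_op M (a0, a1, r)) RE l) = snd (Dgraph M RE l)"
    unfolding set_eq_iff
  proof (clarify)
    fix a b
    show "(a, b) \<in> snd (Dgraph (swap_op M (a0, a1, r)) RE l) \<longleftrightarrow> (a, b) \<in> snd (Dgraph M RE l)"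
      unfolding Dgraph_swap_mem Dgraph_mem[of a b M] using assms by metis
  qed
  moreover have "fst (Dgraph (swap_op M (a0, a1, r)) RE l) = fst (Dgraph M RE l)" by simp
  ultimately show ?thesis by (metis prod.collapse)
qed

lemma pred_semi:
  assumes fin: "finite A" and EA: "E \<subseteq> A \<times> A"
    and pred: "\<forall>u\<in>A - B. \<exists>p. (p, u) \<in> E" and uA: "u \<in> A"
  shows "(\<exists>b\<in>B. (b, u) \<in> E\<^sup>*) \<or> (\<exists>c. (c, c) \<in> E\<^sup>+ \<and> (c, u) \<in> E\<^sup>*)"
proof (rule ccontr)
  assume neg: "\<not> ?thesis"
  then have negB: "\<And>b. b \<in> B \<Longrightarrow> (b, u) \<notin> E\<^sup>*"
    and negC: "\<And>c. (c, c) \<in> E\<^sup>+ \<Longrightarrow> (c, u) \<notin> E\<^sup>*" by blast+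
  define S where "S = {a. (a, u) \<in> E\<^sup>*}"
  have SA: "S \<subseteq> A"
  proof
    fix a assume "a \<in> S"
    then have "(a, u) \<in> E\<^sup>*" by (simp add: S_def)
    then show "a \<in> A"
    proof (cases rule: converse_rtranclE)
      case base then show ?thesis using uA by simp
    next
      case (step c) then show ?thesis using EA by blast
    qed
  qed
  define R where "R = E \<inter> (S \<times> S)"
  have finS: "finite S" using fin SA by (rule finite_subset[rotated])
  have RS: "R \<subseteq> S \<times> S" by (simp add: R_def)
  have finR: "finite R" using finS RS by (meson finite_SigmaI finite_subset)
  have "\<not> acyclic R"
  proof
    assume "acyclic R"
    then have wfR: "wf R" using finR finite_acyclic_wf by blast
    have uS: "u \<in> S" by (simp add: S_def)
    obtain a where a: "a \<in> S" "\<And>p. (p, a) \<in> R \<Longrightarrow> p \<notin> S"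
      using wfE_min[OF wfR uS] by blast
    have au: "(a, u) \<in> E\<^sup>*" using a(1) by (simp add: S_def)
    have "a \<notin> B" using negB au by blast
    moreover have "a \<in> A" using a(1) SA by blast
    ultimately obtain p where p: "(p, a) \<in> E" using pred by blast
    have "(p, u) \<in> E\<^sup>*" using p au by (rule converse_rtrancl_into_rtrancl)
    then have "p \<in> S" by (simp add: S_def)
    moreover have "(p, a) \<in> R" using p \<open>p \<in> S\<close> a(1) by (simp add: R_def)
    ultimately show False using a(2) by blast
  qed
  then obtain c where cR: "(c, c) \<in> R\<^sup>+" unfolding acyclic_def by blast
  have "R\<^sup>+ \<subseteq> E\<^sup>+" using trancl_mono[of _ R E] unfolding R_def by blast
  then have cE: "(c, c) \<in> E\<^sup>+" using cR by blast
  have "c \<in> S" using cR trancl_subset_Sigma[OF RS] by blast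
  then have "(c, u) \<in> E\<^sup>*" by (simp add: S_def)
  then show False using negC cE by blast
qed

lemma semi_pred:
  assumes "(\<exists>b\<in>B. (b, u) \<in> E\<^sup>*) \<or> (\<exists>c. (c, c) \<in> E\<^sup>+ \<and> (c, u) \<in> E\<^sup>*)" "u \<notin> B"
  shows "\<exists>p. (p, u) \<in> E"
  using assms
proof (elim disjE exE bexE conjE)
  fix b assume "b \<in> B" "(b, u) \<in> E\<^sup>*"
  then have "(b, u) \<in> E\<^sup>+" using assms(2) by (metis rtranclD)
  then show ?thesis by (cases rule: tranclE) auto
next
  fix c assume "(c, c) \<in> E\<^sup>+" "(c, u) \<in> E\<^sup>*"
  then have "(c, u) \<in> E\<^sup>+" by auto
  then show ?thesis by (cases rule: tranclE) auto
qed

lemma val_fin: "finite (fst D) \<Longrightarrow> finite {val_set f B X | X. is_base D X}"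
proof -
  assume "finite (fst D)"
  then have "finite ((\<lambda>X. val_set f B X) ` Pow (fst D))" by simp
  moreover have "{val_set f B X | X. is_base D X} \<subseteq> (\<lambda>X. val_set f B X) ` Pow (fst D)"
    by (auto simp: is_base_def)
  ultimately show ?thesis by (rule finite_subset[rotated])
qed

lemma base_self: "is_base D (fst D)"
  by (auto simp: is_base_def)

lemma val_le: "finite (fst D) \<Longrightarrow> is_base D X \<Longrightarrow> val_graph f B D \<le> val_set f B X"
  unfolding val_graph_def by (rule Min_le) (auto intro: val_fin)

lemma val_ex: "finite (fst D) \<Longrightarrow> \<exists>X. is_base D X \<and> val_graph f B D = val_set f B X"
proof -
  assume fin: "finite (fst D)"
  have "val_graph f B D \<in> {val_set f B X | X. is_base D X}"
    unfolding val_graph_def using val_fin[OF fin] base_self[of D]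
    by (intro Min_in) auto
  then show ?thesis by auto
qed

lemma cost:
  assumes "finite X" "y \<in> X" "y \<notin> B" "finite W"
  shows "val_set f B ((X - {y}) \<union> B \<union> W) + f y \<le> val_set f B X + sum f W"
proof -
  have sub: "((X - {y}) \<union> B \<union> W) - B \<subseteq> (X - B - {y}) \<union> W" by auto
  have "val_set f B ((X - {y}) \<union> B \<union> W) \<le> sum f ((X - B - {y}) \<union> W)"
    unfolding val_set_def using sub assms by (intro sum_mono2) auto
  also have "\<dots> \<le> sum f (X - B - {y}) + sum f W"
    using assms by (simp add: sum_Un_nat)
  finally have 1: "val_set f B ((X - {y}) \<union> B \<union> W) \<le> sum f (X - B - {y}) + sum f W" .
  have "val_set f B X = f y + sum f (X - B - {y})"
    unfolding val_set_def using assms by (metis DiffI finite_Diff sum.remove)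
  then show ?thesis using 1 by simp
qed



theorem lemma7:
  fixes NF :: "'r set"
    and \<phi> :: "('c, 'r, 'o) formula"
    and RE :: "('c, 'r) reach list"
    and DI :: "('c \<times> 'c) set"
    and M :: "('a, 'c, 'r, 'o) struc"
    and f :: "nat \<Rightarrow> 'a \<Rightarrow> nat"
    and h' :: nat
  assumes "is_ALCQIO_bRe NF RE DI"
    and "wf_struc NF M"
    and "1 \<le> h'" and "h' \<le> length RE"
    and "sat_assoc M \<phi> RE DI"
    and "semi_connected M \<phi> RE DI"
    and "\<forall>l\<in>{1..length RE}. useful_labeling \<phi> RE l M (f l)"
    and "val (f h') M RE h' > 0"
  shows "\<exists>a0 a1 r. a0 \<in> univ M \<and> a1 \<in> univ M \<and> r \<in> NF \<and>
    (let M' = swap_op M (a0, a1, r) in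
      (\<forall>l\<in>{1..length RE}. l \<noteq> h' \<longrightarrow> Dgraph M RE l = Dgraph M' RE l) \<and>
      (\<forall>u\<in>univ M. tp \<phi> M u = tp \<phi> M' u) \<and>
      sat_assoc M' \<phi> RE DI \<and>
      val (f h') M RE h' > val (f h') M' RE h' \<and>
      (\<forall>l\<in>{1..length RE}. l \<noteq> h' \<longrightarrow> val (f l) M RE l = val (f l) M' RE l) \<and>
      semi_connected M' \<phi> RE DI \<and>
      (\<forall>l\<in>{1..length RE}. useful_labeling \<phi> RE l M' (f l)))"
proof -
  note alc = assms(1) and wf = assms(2) and sa = assms(5) and scM = assms(6)
    and labs = assms(7) and vpos = assms(8)
  define A where "A = cint M (reachA RE h')"
  define B where "B = cint M (reachB RE h')"
  define S where "S = reachS RE h'"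
  define E where "E = snd (Dgraph M RE h')"
  define g where "g = f h'"
  have h'in: "h' \<in> {1..length RE}" using assms(3,4) by simp
  have DA: "Dgraph M RE h' = (A, E)" by (simp add: Dgraph_def A_def E_def)
  have Emem: "(a, b) \<in> E \<longleftrightarrow> a \<in> A \<and> b \<in> A \<and> (\<exists>s\<in>S. (a, b) \<in> rint M s)" for a b
    unfolding E_def A_def S_def by (rule Dgraph_mem)
  have EA: "E \<subseteq> A \<times> A" using Emem by auto
  have AU: "A \<subseteq> univ M" using wf by (auto simp: wf_struc_def A_def)
  have finA: "finite A" using wf AU by (auto simp: wf_struc_def intro: finite_subset)
  have BA: "B \<subseteq> A" using sa h'in by (auto simp: sat_assoc_def A_def B_def)
  have SNF: "S \<subseteq> NF" using alc h'in by (auto simp: is_ALCQIO_bRe_def S_def)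
  have lab: "useful_labeling \<phi> RE h' M g" using labs h'in by (simp add: g_def)
  have labc: "(\<forall>u\<in>A. 1 \<le> g u \<and> g u \<le> card (TYPES \<phi>)) \<and>
     (\<forall>u\<in>A. \<forall>v\<in>A. g u = g v \<longrightarrow> tp \<phi> M u = tp \<phi> M v)"
    using lab[unfolded useful_labeling_def, THEN conjunct1]
      lab[unfolded useful_labeling_def, THEN conjunct2, THEN conjunct1]
    unfolding A_def by (rule conjI)
  have lab1: "\<And>u. u \<in> A \<Longrightarrow> 1 \<le> g u" using labc by blast
  have lab2: "\<And>u v. u \<in> A \<Longrightarrow> v \<in> A \<Longrightarrow> g u = g v \<Longrightarrow> tp \<phi> M u = tp \<phi> M v"
    using labc by blast
  have lab3': "\<forall>u\<in>A. u \<in> B \<or> (\<exists>v\<in>A. \<exists>w\<in>A. g u = g v \<and> g w < g v \<and> (w, v) \<in> E)"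
    using lab[unfolded useful_labeling_def, THEN conjunct2, THEN conjunct2]
    unfolding A_def B_def E_def .
  have lab3: "\<And>u. u \<in> A \<Longrightarrow> u \<notin> B \<Longrightarrow>
      \<exists>v\<in>A. \<exists>w\<in>A. g u = g v \<and> g w < g v \<and> (w, v) \<in> E"
    using lab3' by blast
  have sc': "\<forall>u\<in>fst (Dgraph M RE h').
        (\<exists>b\<in>cint M (reachB RE h'). (b, u) \<in> (snd (Dgraph M RE h'))\<^sup>*) \<or>
        (\<exists>c. (c, c) \<in> (snd (Dgraph M RE h'))\<^sup>+ \<and> (c, u) \<in> (snd (Dgraph M RE h'))\<^sup>*)"
    using scM[unfolded semi_connected_def, THEN conjunct2] h'in by (rule bspec)
  have sc: "\<And>u. u \<in> A \<Longrightarrow> (\<exists>b\<in>B. (b, u) \<in> E\<^sup>*) \<or> (\<exists>c. (c, c) \<in> E\<^sup>+ \<and> (c, u) \<in> E\<^sup>*)"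
    using sc' unfolding DA B_def by simp
  have valeq: "val g M RE h' = val_graph g B (A, E)" by (simp add: val_def DA B_def)
  obtain X where Xb: "is_base (A, E) X" and Xv: "val_graph g B (A, E) = val_set g B X"
    using val_ex[of "(A, E)" g B] finA by auto
  have XA: "X \<subseteq> A" using Xb by (simp add: is_base_def)
  have finX: "finite X" using XA finA by (rule finite_subset)
  have opt: "\<And>Y. is_base (A, E) Y \<Longrightarrow> val_set g B X \<le> val_set g B Y"
    using val_le[of "(A, E)"] finA Xv by (metis fst_conv)
  have "val_set g B X > 0" using vpos valeq Xv by (simp add: g_def)
  then have "X - B \<noteq> {}"
  proof (intro notI)
    assume "X - B = {}"
    then have "val_set g B X = 0" unfolding val_set_def by (simp only: sum.empty)
    then show False using \<open>val_set g B X > 0\<close> by simp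
  qed
  then obtain y where yX: "y \<in> X" and yB: "y \<notin> B" by blast
  have yA: "y \<in> A" using yX XA by blast
  have gy: "1 \<le> g y" using lab1 yA .
  have mkbase: "\<And>Y. Y \<subseteq> A \<Longrightarrow> (\<forall>x\<in>X. \<exists>z\<in>Y. (z, x) \<in> E\<^sup>*) \<Longrightarrow> is_base (A, E) Y"
  proof -
    fix Y assume YA: "Y \<subseteq> A" and h: "\<forall>x\<in>X. \<exists>z\<in>Y. (z, x) \<in> E\<^sup>*"
    show "is_base (A, E) Y" unfolding is_base_def
    proof (intro conjI ballI)
      show "Y \<subseteq> fst (A, E)" using YA by simp
    next
      fix v assume "v \<in> fst (A, E)"
      then obtain x where "x \<in> X" "(x, v) \<in> E\<^sup>*" using Xb by (auto simp: is_base_def)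
      moreover obtain z where "z \<in> Y" "(z, x) \<in> E\<^sup>*" using h calculation by blast
      ultimately show "\<exists>x\<in>Y. (x, v) \<in> (snd (A, E))\<^sup>*" by (auto intro: rtrancl_trans)
    qed
  qed
  have better: "\<And>w. w \<in> A \<Longrightarrow> g w < g y \<Longrightarrow> (w, y) \<in> E\<^sup>* \<Longrightarrow> False"
  proof -
    fix w assume wA: "w \<in> A" and gw: "g w < g y" and wy: "(w, y) \<in> E\<^sup>*"
    let ?Y = "(X - {y}) \<union> B \<union> {w}"
    have "is_base (A, E) ?Y"
    proof (rule mkbase)
      show "?Y \<subseteq> A" using XA BA wA by blast
      show "\<forall>x\<in>X. \<exists>z\<in>?Y. (z, x) \<in> E\<^sup>*"
      proof
        fix x assume "x \<in> X"
        show "\<exists>z\<in>?Y. (z, x) \<in> E\<^sup>*"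
        proof (cases "x = y")
          case True then show ?thesis using wy by blast
        next
          case False then show ?thesis using \<open>x \<in> X\<close> by blast
        qed
      qed
    qed
    then have "val_set g B X \<le> val_set g B ?Y" by (rule opt)
    moreover have "val_set g B ?Y + g y \<le> val_set g B X + sum g {w}"
      using cost[OF finX yX yB, of "{w}" g] by simp
    ultimately show False using gw by simp
  qed
  have noreach: "\<And>x. x \<in> (X - {y}) \<union> B \<Longrightarrow> (x, y) \<notin> E\<^sup>*"
  proof
    fix x assume xY: "x \<in> (X - {y}) \<union> B" and xy: "(x, y) \<in> E\<^sup>*"
    let ?Y = "(X - {y}) \<union> B \<union> {}"
    have "is_base (A, E) ?Y"
    proof (rule mkbase)
      show "?Y \<subseteq> A" using XA BA by blast
      show "\<forall>x\<in>X. \<exists>z\<in>?Y. (z, x) \<in> E\<^sup>*"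
      proof
        fix x' assume "x' \<in> X"
        show "\<exists>z\<in>?Y. (z, x') \<in> E\<^sup>*"
        proof (cases "x' = y")
          case True then show ?thesis using xy xY by blast
        next
          case False then show ?thesis using \<open>x' \<in> X\<close> by blast
        qed
      qed
    qed
    then have "val_set g B X \<le> val_set g B ?Y" by (rule opt)
    moreover have "val_set g B ?Y + g y \<le> val_set g B X + sum g {}"
      using cost[OF finX yX yB, of "{}" g] by simp
    ultimately show False using gy by simp
  qed
  have cyc: "(y, y) \<in> E\<^sup>+"
  proof -
    from sc[OF yA] show ?thesis
    proof (elim disjE bexE exE conjE)
      fix b assume "b \<in> B" "(b, y) \<in> E\<^sup>*"
      then show ?thesis using noreach by blast
    next
      fix c assume cc: "(c, c) \<in> E\<^sup>+" and cy: "(c, y) \<in> E\<^sup>*"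
      have "c \<in> A" using cc EA by (metis SigmaD1 subsetD trancl_subset_Sigma)
      then obtain x where "x \<in> X" "(x, c) \<in> E\<^sup>*" using Xb by (auto simp: is_base_def)
      moreover have "(x, y) \<in> E\<^sup>*" using calculation(2) cy by (rule rtrancl_trans)
      ultimately have "x = y" using noreach by blast
      then have "(y, c) \<in> E\<^sup>*" using \<open>(x, c) \<in> E\<^sup>*\<close> by simp
      then have "(y, c) \<in> E\<^sup>+" using cc by (rule rtrancl_trancl_trancl)
      then show ?thesis using cy by (rule trancl_rtrancl_trancl)
    qed
  qed
  obtain z where yz: "(y, z) \<in> E" and zy: "(z, y) \<in> E\<^sup>*" using tranclD[OF cyc] by blast
  obtain r where rS: "r \<in> S" and yzr: "(y, z) \<in> rint M r" and zA: "z \<in> A"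
    using yz Emem by blast
  obtain t w where tA: "t \<in> A" and wA: "w \<in> A" and gyt: "g y = g t" and gwt: "g w < g t"
    and wt: "(w, t) \<in> E"
    using lab3[OF yA yB] by blast
  have tpyt: "tp \<phi> M y = tp \<phi> M t" using lab2[OF yA tA gyt] .
  have tny: "(t, y) \<notin> E\<^sup>*"
  proof
    assume "(t, y) \<in> E\<^sup>*"
    then have "(w, y) \<in> E\<^sup>*" using wt by (blast intro: converse_rtrancl_into_rtrancl)
    then show False using better[OF wA] gwt gyt by simp
  qed
  have ty: "t \<noteq> y" using tny by auto
  have wy: "w \<noteq> y" and wtn: "w \<noteq> t" using gwt gyt by auto
  have yU: "y \<in> univ M" and tU: "t \<in> univ M" using yA tA AU by auto
  have rNF: "r \<in> NF" using rS SNF by blast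
  have hty: "\<forall>C\<in>Con \<phi>. (y \<in> ceval M C) = (t \<in> ceval M C)"
    using tpyt unfolding tp_def by blast
  define M' where "M' = swap_op M (y, t, r)"
  define E' where "E' = snd (Dgraph M' RE h')"
  have gsw: "\<And>a. g (sw y t a) = g a" using gyt by (simp add: sw_def)
  have swA: "\<And>a. (sw y t a \<in> A) = (a \<in> A)" using yA tA by (auto simp: sw_def)
  have E'A: "E' \<subseteq> A \<times> A" unfolding E'_def M'_def A_def by (auto simp: Dgraph_swap_mem)
  have e1: "\<And>a b. (a, b) \<in> E \<Longrightarrow> a \<noteq> y \<Longrightarrow> a \<noteq> t \<Longrightarrow> (a, b) \<in> E'"
    unfolding E_def E'_def M'_def by (rule edge_keep)
  have e2: "\<And>a b. (a, b) \<in> E \<Longrightarrow> (a, b) \<in> E' \<or> (sw y t a, b) \<in> E'"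
  proof -
    fix a b assume ab: "(a, b) \<in> E"
    then have "a \<in> A" using EA by blast
    then have "sw y t a \<in> A" using swA by simp
    then show "(a, b) \<in> E' \<or> (sw y t a, b) \<in> E'"
      using edge_move[of a b M RE h' y t r] ab unfolding E_def E'_def M'_def A_def by blast
  qed
  have e3: "(t, z) \<in> E'"
  proof -
    have "(sw y t y, z) \<in> E'"
      unfolding E'_def M'_def using yzr rS swA yA zA
      by (intro edge_r) (auto simp: S_def A_def)
    then show ?thesis by (simp add: sw_def)
  qed
  have path: "\<And>p. (p, y) \<in> E\<^sup>* \<Longrightarrow> (p, y) \<in> E'\<^sup>*"
  proof -
    fix p assume "(p, y) \<in> E\<^sup>*"
    then show "(p, y) \<in> E'\<^sup>*"
    proof (induction rule: converse_rtrancl_induct)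
      case base then show ?case by simp
    next
      case (step p q)
      show ?case
      proof (cases "p = y")
        case True then show ?thesis by simp
      next
        case False
        have "p \<noteq> t" using step.hyps tny converse_rtrancl_into_rtrancl by metis
        then have "(p, q) \<in> E'" using e1 step.hyps(1) False by blast
        then show ?thesis using step.IH by (rule converse_rtrancl_into_rtrancl)
      qed
    qed
  qed
  have tpM': "\<And>u. tp \<phi> M' u = tp \<phi> M u"
    unfolding M'_def using tp_swap[OF wf yU tU hty] .
  have fsatM': "fsat M' \<phi> = fsat M \<phi>"
    unfolding M'_def using fsat_swap[OF wf yU tU hty] by simp
  have cintM'[simp]: "cint M' = cint M" by (simp add: M'_def)
  have saM': "sat_assoc M' \<phi> RE DI" using sa fsatM' by (simp add: sat_assoc_def)
  have Dother: "\<And>l. l \<in> {1..length RE} \<Longrightarrow> l \<noteq> h' \<Longrightarrow> Dgraph M' RE l = Dgraph M RE l"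
  proof -
    fix l assume lin: "l \<in> {1..length RE}" and lh: "l \<noteq> h'"
    show "Dgraph M' RE l = Dgraph M RE l"
    proof (cases "r \<in> reachS RE l")
      case False then show ?thesis unfolding M'_def by (rule Dgraph_other2)
    next
      case True
      then have "reachS RE h' \<inter> reachS RE l \<noteq> {}" using rS S_def by blast
      then have "(reachA RE h', reachA RE l) \<in> DI \<or> (reachA RE l, reachA RE h') \<in> DI"
        using alc h'in lin lh unfolding is_ALCQIO_bRe_def compatible_def by blast
      then have "cint M (reachA RE h') \<inter> cint M (reachA RE l) = {}"
        using sa unfolding sat_assoc_def by blast
      then have "y \<notin> cint M (reachA RE l)" "t \<notin> cint M (reachA RE l)"
        using yA tA unfolding A_def by blast+
      then show ?thesis unfolding M'_def by (rule Dgraph_other)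
    qed
  qed
  have DA': "Dgraph M' RE h' = (A, E')" by (simp add: Dgraph_def A_def E'_def)
  have newbase: "is_base (A, E') ((X - {y}) \<union> B \<union> {w})"
  proof -
    let ?X' = "(X - {y}) \<union> B \<union> {w}"
    define P where "P = {v. \<exists>x\<in>?X'. (x, v) \<in> E'\<^sup>*}"
    have wP: "w \<in> P" unfolding P_def by blast
    have tP: "t \<in> P"
    proof -
      have "(w, t) \<in> E'" using e1 wt wy wtn by blast
      then show ?thesis using wP unfolding P_def by (blast intro: rtrancl_into_rtrancl)
    qed
    have yP: "y \<in> P"
    proof -
      have "(t, y) \<in> E'\<^sup>*" using e3 path[OF zy] by (rule converse_rtrancl_into_rtrancl)
      then show ?thesis using tP unfolding P_def by (blast intro: rtrancl_trans)
    qed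
    have closed: "\<And>a b. a \<in> P \<Longrightarrow> (a, b) \<in> E \<Longrightarrow> b \<in> P"
    proof -
      fix a b assume aP: "a \<in> P" and ab: "(a, b) \<in> E"
      have swP: "sw y t a \<in> P"
        using aP yP tP by (cases "a = y"; cases "a = t") (auto simp: sw_def)
      from e2[OF ab] show "b \<in> P"
      proof
        assume "(a, b) \<in> E'"
        then show ?thesis using aP unfolding P_def by (blast intro: rtrancl_into_rtrancl)
      next
        assume "(sw y t a, b) \<in> E'"
        then show ?thesis using swP unfolding P_def by (blast intro: rtrancl_into_rtrancl)
      qed
    qed
    have XP: "X \<subseteq> P"
    proof
      fix x assume "x \<in> X"
      then show "x \<in> P" using yP by (cases "x = y") (auto simp: P_def)
    qed
    have AP: "A \<subseteq> P"
    proof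
      fix v assume "v \<in> A"
      then obtain x where xX: "x \<in> X" and xv: "(x, v) \<in> E\<^sup>*" using Xb by (auto simp: is_base_def)
      from xv show "v \<in> P"
      proof (induction rule: rtrancl_induct)
        case base then show ?case using XP xX by blast
      next
        case (step b c) then show ?case using closed by blast
      qed
    qed
    show ?thesis unfolding is_base_def using AP XA BA wA by (auto simp: P_def)
  qed
  have valdec: "val g M' RE h' < val g M RE h'"
  proof -
    have "val g M' RE h' = val_graph g B (A, E')" by (simp add: val_def DA' B_def)
    also have "\<dots> \<le> val_set g B ((X - {y}) \<union> B \<union> {w})"
      using val_le[OF _ newbase] finA by simp
    also have "\<dots> < val_set g B X"
      using cost[OF finX yX yB, of "{w}" g] gwt gyt by simp
    also have "\<dots> = val g M RE h'" using valeq Xv by simp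
    finally show ?thesis .
  qed
  have scM': "semi_connected M' \<phi> RE DI"
    unfolding semi_connected_def
  proof (intro conjI ballI)
    show "sat_assoc M' \<phi> RE DI" by (rule saM')
  next
    fix l u assume lin: "l \<in> {1..length RE}" and uin: "u \<in> fst (Dgraph M' RE l)"
    show "(\<exists>b\<in>cint M' (reachB RE l). (b, u) \<in> (snd (Dgraph M' RE l))\<^sup>*) \<or>
          (\<exists>c. (c, c) \<in> (snd (Dgraph M' RE l))\<^sup>+ \<and> (c, u) \<in> (snd (Dgraph M' RE l))\<^sup>*)"
    proof (cases "l = h'")
      case False
      have "u \<in> fst (Dgraph M RE l)" using uin unfolding Dother[OF lin False] .
      then have "(\<exists>b\<in>cint M (reachB RE l). (b, u) \<in> (snd (Dgraph M RE l))\<^sup>*) \<or>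
          (\<exists>c. (c, c) \<in> (snd (Dgraph M RE l))\<^sup>+ \<and> (c, u) \<in> (snd (Dgraph M RE l))\<^sup>*)"
        using scM[unfolded semi_connected_def, THEN conjunct2] lin by blast
      then show ?thesis unfolding Dother[OF lin False] cintM' .
    next
      case True
      have uA: "u \<in> A" using uin unfolding True DA' fst_conv .
      have pred: "\<forall>u\<in>A - B. \<exists>p. (p, u) \<in> E'"
      proof
        fix v assume "v \<in> A - B"
        then obtain p where "(p, v) \<in> E" using semi_pred[OF sc] by blast
        then show "\<exists>p. (p, v) \<in> E'" using e2 by blast
      qed
      have "(\<exists>b\<in>B. (b, u) \<in> E'\<^sup>*) \<or> (\<exists>c. (c, c) \<in> E'\<^sup>+ \<and> (c, u) \<in> E'\<^sup>*)"
        by (rule pred_semi[OF finA E'A pred uA])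
      then show ?thesis unfolding True DA' cintM' B_def[symmetric] snd_conv .
    qed
  qed
  have labM': "\<forall>l\<in>{1..length RE}. useful_labeling \<phi> RE l M' (f l)"
  proof
    fix l assume lin: "l \<in> {1..length RE}"
    show "useful_labeling \<phi> RE l M' (f l)"
    proof (cases "l = h'")
      case False
      have "useful_labeling \<phi> RE l M (f l)" using labs lin by blast
      then show ?thesis unfolding useful_labeling_def cintM' Dother[OF lin False] tpM' .
    next
      case True
      show ?thesis unfolding useful_labeling_def True cintM' A_def[symmetric] B_def[symmetric]
        g_def[symmetric] E'_def[symmetric] tpM'
      proof (intro conjI ballI impI)
        fix u assume "u \<in> A"
        then show "1 \<le> g u" using labc by blast
      next
        fix u assume "u \<in> A"
        then show "g u \<le> card (TYPES \<phi>)" using labc by blast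
      next
        fix u v assume "u \<in> A" "v \<in> A" "g u = g v"
        then show "tp \<phi> M u = tp \<phi> M v" using lab2 by blast
      next
        fix u assume uA: "u \<in> A"
        show "u \<in> B \<or> (\<exists>v\<in>A. \<exists>w\<in>A. g u = g v \<and> g w < g v \<and> (w, v) \<in> E')"
        proof (cases "u \<in> B")
          case True then show ?thesis by blast
        next
          case False
          obtain v w where vA: "v \<in> A" and wA: "w \<in> A" and "g u = g v" "g w < g v"
            and wv: "(w, v) \<in> E" using lab3[OF uA False] by blast
          from e2[OF wv] obtain w' where "w' \<in> A" "g w' = g w" "(w', v) \<in> E'"
            using swA gsw wA by blast
          then show ?thesis using vA \<open>g u = g v\<close> \<open>g w < g v\<close> by auto
        qed
      qed
    qed
  qed
  show ?thesis
    unfolding Let_def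
  proof (rule exI[of _ y], rule exI[of _ t], rule exI[of _ r], fold M'_def, intro conjI)
    show "y \<in> univ M" "t \<in> univ M" "r \<in> NF" using yU tU rNF by auto
    show "\<forall>l\<in>{1..length RE}. l \<noteq> h' \<longrightarrow> Dgraph M RE l = Dgraph M' RE l"
      using Dother by auto
    show "\<forall>u\<in>univ M. tp \<phi> M u = tp \<phi> M' u" using tpM' by auto
    show "sat_assoc M' \<phi> RE DI" by (rule saM')
    show "val (f h') M' RE h' < val (f h') M RE h'" using valdec unfolding g_def .
    show "\<forall>l\<in>{1..length RE}. l \<noteq> h' \<longrightarrow> val (f l) M RE l = val (f l) M' RE l"
      using Dother by (auto simp: val_def)
    show "semi_connected M' \<phi> RE DI" by (rule scM')
    show "\<forall>l\<in>{1..length RE}. useful_labeling \<phi> RE l M' (f l)" by (rule labM')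
  qed
qed

end
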